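(* Let $n\geqslant 2$, $\lambda>0$, let $p_1,\ldots,p_M\in\mathbb{Z}^n$ be distinct points and $n_1,\ldots,n_M$ positive integers. Consider the self-dual Chern–Simons vortex equation $$\Delta u=\lambda e^u(e^u-1)+4\pi\sum_{j=1}^M n_j\delta_{p_j}\quad\text{on }\mathbb{Z}^n,\qquad \lim_{d(x)\to+\infty}u(x)=0. \qquad (\ast)$$ Then $(\ast)$ has a solution $u$ (a topological solution) with $u\in l^p(\mathbb{Z}^n)$ for every $1\leqslant p\leqslant\infty$, which is maximal among all solutions of $(\ast)$, i.e. $f\leqslant u$ pointwise on $\mathbb{Z}^n$ for every solution $f$ of $(\ast)$. Moreover, setting $m=\ln(1+\frac{\lambda}{2n})$, for every $0<\epsilon<1$ one has $u(x)=O(e^{-m(1-\epsilon)d(x)})$ as $d(x)\to+\infty$, i.e. there is a constant $C(\epsilon)$ with $|u(x)|\leqslant C(\epsilon)e^{-m(1-\epsilon)d(x)}$ for all $x$ with $d(x)$ sufficiently large.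
   Context: $\mathbb{Z}^n$ is the integer lattice graph: vertices are the points of $\mathbb{Z}^n$, and $x\sim y$ iff $\sum_{i=1}^n|x_i-y_i|=1$. The distance is $d(x,y)=\sum_{i=1}^n|x_i-y_i|$ and $d(x)=d(x,0)$. The Laplacian of $u:\mathbb{Z}^n\to\mathbb{R}$ is $\Delta u(x)=\sum_{y:\,d(x,y)=1}(u(y)-u(x))$. $\delta_p$ denotes the function on $\mathbb{Z}^n$ equal to $1$ at $p$ and $0$ elsewhere. $l^p(\mathbb{Z}^n)$ is the space of functions with $\sum_x|u(x)|^p<\infty$ ($1\leqslant p<\infty$), resp. $\sup_x|u(x)|<\infty$ ($p=\infty$). A solution $u$ of the equation with $u(x)\to0$ as $d(x)\to\infty$ is called topological. *)

theory Defs
  imports "HOL-Analysis.Analysis"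
begin

text \<open>The lattice Z^n is represented as the type int ^ 'n, with n = CARD('n).\<close>

definition ldist :: "int ^ 'n \<Rightarrow> int ^ 'n \<Rightarrow> int" where
  "ldist x y = (\<Sum>i\<in>UNIV. \<bar>x $ i - y $ i\<bar>)"

definition lnorm :: "int ^ 'n \<Rightarrow> int" where
  "lnorm x = ldist x 0"

definition lap :: "(int ^ 'n \<Rightarrow> real) \<Rightarrow> int ^ 'n \<Rightarrow> real" where
  "lap u x = (\<Sum>y\<in>{y. ldist x y = 1}. u y - u x)"

definition ldelta :: "int ^ 'n \<Rightarrow> int ^ 'n \<Rightarrow> real" where
  "ldelta p x = (if x = p then 1 else 0)"

definition vanish_at_infinity :: "(int ^ 'n \<Rightarrow> real) \<Rightarrow> bool" where
  "vanish_at_infinity u \<longleftrightarrow> (\<forall>e>0. \<exists>R. \<forall>x. lnorm x \<ge> R \<longrightarrow> \<bar>u x\<bar> < e)"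

definition cs_solution ::
  "real \<Rightarrow> nat \<Rightarrow> (nat \<Rightarrow> int ^ 'n) \<Rightarrow> (nat \<Rightarrow> nat) \<Rightarrow> (int ^ 'n \<Rightarrow> real) \<Rightarrow> bool" where
  "cs_solution lam M p nn u \<longleftrightarrow>
     (\<forall>x. lap u x = lam * exp (u x) * (exp (u x) - 1)
                    + 4 * pi * (\<Sum>j\<in>{1..M}. real (nn j) * ldelta (p j) x))
     \<and> vanish_at_infinity u"

definition in_lp :: "real \<Rightarrow> (int ^ 'n \<Rightarrow> real) \<Rightarrow> bool" where
  "in_lp q u = ((\<lambda>x. \<bar>u x\<bar> powr q) summable_on UNIV)"

definition in_linf :: "(int ^ 'n \<Rightarrow> real) \<Rightarrow> bool" where
  "in_linf u = (\<exists>B. \<forall>x. \<bar>u x\<bar> \<le> B)"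

end

theory Submission
  imports Defs
begin
lemma axis_nth: "(axis i (1::int)) $ j = (if j = i then 1 else 0)"
  by (simp add: axis_def)

lemma ldist_one_iff:
  fixes x y :: "int ^ 'n"
  shows "ldist x y = 1 \<longleftrightarrow> (\<exists>i. y = x + axis i 1 \<or> y = x - axis i 1)"
proof
  assume h: "ldist x y = 1"
  define d where "d = x - y"
  have hs: "(\<Sum>j\<in>UNIV. \<bar>d $ j\<bar>) = 1" using h by (simp add: ldist_def d_def)
  obtain i where di: "d $ i \<noteq> 0"
  proof (rule ccontr)
    assume "\<not> thesis"
    then have "\<forall>j. d $ j = 0" using that by blast
    then show False using hs by simp
  qed
  have split: "(\<Sum>j\<in>UNIV. \<bar>d $ j\<bar>) = \<bar>d $ i\<bar> + (\<Sum>j\<in>UNIV - {i}. \<bar>d $ j\<bar>)"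
    by (simp add: sum.remove)
  have r0: "(\<Sum>j\<in>UNIV - {i}. \<bar>d $ j\<bar>) \<ge> 0" by (simp add: sum_nonneg)
  have a1: "\<bar>d $ i\<bar> \<ge> 1" using di by linarith
  have ai: "\<bar>d $ i\<bar> = 1" and r: "(\<Sum>j\<in>UNIV - {i}. \<bar>d $ j\<bar>) = 0"
    using hs split r0 a1 by linarith+
  have z: "\<forall>j. j \<noteq> i \<longrightarrow> d $ j = 0"
    using r by (subst (asm) sum_nonneg_eq_0_iff) auto
  show "\<exists>i. y = x + axis i 1 \<or> y = x - axis i 1"
  proof (cases "d $ i = 1")
    case True
    then have "y = x - axis i 1" using z unfolding d_def
      by (auto simp: vec_eq_iff axis_nth)
    then show ?thesis by blast
  next
    case False
    then have "d $ i = -1" using ai by linarith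
    then have "y = x + axis i 1" using z unfolding d_def
      by (auto simp: vec_eq_iff axis_nth)
    then show ?thesis by blast
  qed
next
  assume "\<exists>i. y = x + axis i 1 \<or> y = x - axis i 1"
  then obtain i where "y = x + axis i 1 \<or> y = x - axis i 1" by blast
  then show "ldist x y = 1"
    by (auto simp: ldist_def axis_nth if_distrib cong: if_cong)
qed

lemma nbr_set:
  fixes x :: "int ^ 'n"
  shows "{y. ldist x y = 1} = range (\<lambda>i. x + axis i 1) \<union> range (\<lambda>i. x - axis i 1)"
  using ldist_one_iff[of x] by blast

lemma lap_eq:
  fixes u :: "int ^ 'n \<Rightarrow> real"
  shows "lap u x = (\<Sum>i\<in>UNIV. u (x + axis i 1) - u x) + (\<Sum>i\<in>UNIV. u (x - axis i 1) - u x)"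
proof -
  have disj: "range (\<lambda>i. x + axis i 1) \<inter> range (\<lambda>i. x - axis i (1::int)) = {}"
  proof (rule ccontr)
    assume "\<not> ?thesis"
    then obtain i j where "x + axis i 1 = x - axis j (1::int)" by auto
    then have "(x + axis i 1) $ i = (x - axis j 1) $ i" by simp
    then show False by (simp add: axis_nth split: if_splits)
  qed
  have inj1: "inj (\<lambda>i. x + axis i (1::int))"
    by (rule injI) (metis add_left_cancel axis_nth zero_neq_one)
  have inj2: "inj (\<lambda>i. x - axis i (1::int))"
    by (rule injI) (metis diff_left_imp_eq axis_nth zero_neq_one)
  show ?thesis
    unfolding lap_def nbr_set
    by (simp add: sum.union_disjoint disj sum.reindex inj1 inj2)
qed

definition Fn :: "real \<Rightarrow> real \<Rightarrow> real" where
  "Fn lam v = lam * exp v * (exp v - 1)"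

definition src :: "nat \<Rightarrow> (nat \<Rightarrow> int ^ 'n) \<Rightarrow> (nat \<Rightarrow> nat) \<Rightarrow> int ^ 'n \<Rightarrow> real" where
  "src M p nn x = 4 * pi * (\<Sum>j\<in>{1..M}. real (nn j) * ldelta (p j) x)"

definition subsol :: "real \<Rightarrow> nat \<Rightarrow> (nat \<Rightarrow> int ^ 'n) \<Rightarrow> (nat \<Rightarrow> nat) \<Rightarrow> (int ^ 'n \<Rightarrow> real) \<Rightarrow> bool" where
  "subsol lam M p nn w \<longleftrightarrow> (\<forall>x. w x \<le> 0) \<and> (\<forall>x. lap w x \<ge> Fn lam (w x) + src M p nn x)"

lemma src_nonneg: "src M p nn x \<ge> 0"
  unfolding src_def ldelta_def by (intro mult_nonneg_nonneg sum_nonneg) auto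

lemma src_zero: "(\<forall>j\<in>{1..M}. x \<noteq> p j) \<Longrightarrow> src M p nn x = 0"
  unfolding src_def ldelta_def by auto

lemma Fn_le0: "lam \<ge> 0 \<Longrightarrow> v \<le> 0 \<Longrightarrow> Fn lam v \<le> 0"
  unfolding Fn_def by (simp add: mult_nonneg_nonpos)

lemma exp_diff_le: "u \<le> v \<Longrightarrow> v \<le> 0 \<Longrightarrow> exp v - exp u \<le> v - (u::real)"
proof -
  assume a: "u \<le> v" "v \<le> 0"
  have "exp (u - v) \<ge> 1 + (u - v)" by (rule exp_ge_add_one_self)
  then have "exp v * exp (u - v) \<ge> exp v * (1 + (u - v))" by simp
  then have "exp u \<ge> exp v + exp v * (u - v)" by (simp add: exp_diff algebra_simps)
  moreover have "exp v * (v - u) \<le> 1 * (v - u)"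
    using a by (intro mult_right_mono) auto
  ultimately show ?thesis by (simp add: algebra_simps)
qed

lemma Fn_lip: "lam \<ge> 0 \<Longrightarrow> u \<le> v \<Longrightarrow> v \<le> 0 \<Longrightarrow> Fn lam v - Fn lam u \<le> lam * (v - u)"
proof -
  assume a: "lam \<ge> 0" "u \<le> v" "v \<le> 0"
  have e1: "exp u \<le> exp v" using a by simp
  have e2: "exp v \<le> 1" using a by simp
  have e3: "exp u \<le> 1" using a by simp
  note e = e1 e2 e3
  have "Fn lam v - Fn lam u = lam * ((exp v - exp u) * (exp v + exp u - 1))"
    unfolding Fn_def by (simp add: algebra_simps power2_eq_square)
  also have "\<dots> \<le> lam * ((exp v - exp u) * 1)"
  proof -
    have "exp v + exp u - 1 \<le> 1" using e by linarith
    then have "(exp v - exp u) * (exp v + exp u - 1) \<le> (exp v - exp u) * 1"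
      by (rule mult_left_mono) (use e1 in simp)
    then show ?thesis by (rule mult_left_mono) (use a in simp)
  qed
  also have "\<dots> \<le> lam * (v - u)"
    using a exp_diff_le[of u v] by (intro mult_left_mono) auto
  finally show ?thesis .
qed

lemma Fn_le_lin: "lam \<ge> 0 \<Longrightarrow> v \<le> 0 \<Longrightarrow> Fn lam v \<le> lam * v * exp (2 * v)"
proof -
  assume a: "lam \<ge> 0" "v \<le> 0"
  have "exp (-v) \<ge> 1 + (-v)" by (rule exp_ge_add_one_self)
  then have "exp v * exp (-v) \<ge> exp v * (1 - v)" by simp
  then have "1 \<ge> exp v * (1 - v)" by (simp add: exp_minus)
  then have "exp v - 1 \<le> v * exp v" by (simp add: algebra_simps)
  then have "lam * exp v * (exp v - 1) \<le> lam * exp v * (v * exp v)"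
    using a by (intro mult_left_mono) auto
  then show ?thesis unfolding Fn_def
    by (simp add: exp_add[symmetric] algebra_simps mult_2)
qed

definition nbsum :: "(int ^ 'n \<Rightarrow> real) \<Rightarrow> int ^ 'n \<Rightarrow> real" where
  "nbsum v x = (\<Sum>i\<in>UNIV. v (x + axis i 1) + v (x - axis i 1))"

lemma lap_nbsum: "lap v x = nbsum v x - 2 * real CARD('n) * v (x :: int ^ 'n)"
  unfolding lap_eq nbsum_def by (simp add: sum.distrib sum_subtractf algebra_simps)

definition Tm :: "real \<Rightarrow> nat \<Rightarrow> (nat \<Rightarrow> int ^ 'n) \<Rightarrow> (nat \<Rightarrow> nat) \<Rightarrow> (int ^ 'n \<Rightarrow> real) \<Rightarrow> int ^ 'n \<Rightarrow> real" where
  "Tm lam M p nn v x = (nbsum v x + lam * v x - Fn lam (v x) - src M p nn x) / (2 * real CARD('n) + lam)"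

lemma Tm_mono:
  assumes lam: "lam > 0" and le: "\<And>y. v y \<le> w y" and w0: "\<And>y. w y \<le> 0"
  shows "Tm lam M p nn v x \<le> Tm lam M p nn w (x :: int ^ 'n)"
proof -
  have "nbsum v x \<le> nbsum w x" unfolding nbsum_def by (intro sum_mono add_mono le)
  moreover have "Fn lam (w x) - Fn lam (v x) \<le> lam * (w x - v x)"
    using Fn_lip[of lam "v x" "w x"] lam le w0 by auto
  ultimately have "nbsum v x + lam * v x - Fn lam (v x) - src M p nn x
      \<le> nbsum w x + lam * w x - Fn lam (w x) - src M p nn x"
    by (simp add: algebra_simps)
  then show ?thesis unfolding Tm_def using lam
    by (intro divide_right_mono) auto
qed

lemma sub_le_Tm:
  assumes lam: "lam > 0" and s: "subsol lam M p nn w"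
  shows "w x \<le> Tm lam M p nn w (x :: int ^ 'n)"
proof -
  have "lap w x \<ge> Fn lam (w x) + src M p nn x" using s unfolding subsol_def by blast
  then have "(2 * real CARD('n) + lam) * w x \<le> nbsum w x + lam * w x - Fn lam (w x) - src M p nn x"
    unfolding lap_nbsum by (simp add: algebra_simps)
  moreover have "2 * real CARD('n) + lam > 0" using lam by simp
  ultimately show ?thesis unfolding Tm_def by (simp add: pos_le_divide_eq mult.commute)
qed

lemma Tm_fix:
  assumes lam: "lam > 0" and "v x = Tm lam M p nn v (x :: int ^ 'n)"
  shows "lap v x = Fn lam (v x) + src M p nn x"
proof -
  have "2 * real CARD('n) + lam > 0" using lam by simp
  then have "(2 * real CARD('n) + lam) * v x = nbsum v x + lam * v x - Fn lam (v x) - src M p nn x"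
    using assms(2) unfolding Tm_def by (simp add: field_simps)
  then show ?thesis unfolding lap_nbsum by (simp add: algebra_simps)
qed

primrec itr :: "real \<Rightarrow> nat \<Rightarrow> (nat \<Rightarrow> int ^ 'n) \<Rightarrow> (nat \<Rightarrow> nat) \<Rightarrow> nat \<Rightarrow> int ^ 'n \<Rightarrow> real" where
  "itr lam M p nn 0 = (\<lambda>x. 0)"
| "itr lam M p nn (Suc k) = Tm lam M p nn (itr lam M p nn k)"

lemma itr_props:
  assumes lam: "lam > 0"
  shows "(\<forall>x. itr lam M p nn k x \<le> 0) \<and> (\<forall>x. itr lam M p nn (Suc k) x \<le> itr lam M p nn k (x::int^'n))"
proof (induction k)
  case 0
  have "Tm lam M p nn (\<lambda>x. 0) x \<le> 0" for x :: "int ^ 'n"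
    unfolding Tm_def nbsum_def Fn_def using lam src_nonneg[of M p nn x]
    by (intro divide_nonpos_pos) auto
  then show ?case by simp
next
  case (Suc k)
  then have a: "\<forall>x. itr lam M p nn (Suc k) x \<le> 0" using order_trans by metis
  have "itr lam M p nn (Suc (Suc k)) x \<le> itr lam M p nn (Suc k) x" for x
  proof -
    have "Tm lam M p nn (itr lam M p nn (Suc k)) x \<le> Tm lam M p nn (itr lam M p nn k) x"
      using Suc by (intro Tm_mono[OF lam]) auto
    then show ?thesis by simp
  qed
  with a show ?case by blast
qed

lemma sub_le_itr:
  assumes lam: "lam > 0" and s: "subsol lam M p nn w"
  shows "w x \<le> itr lam M p nn k (x::int^'n)"
proof (induction k arbitrary: x)
  case 0
  then show ?case using s unfolding subsol_def by simp
next
  case (Suc k)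
  have "w x \<le> Tm lam M p nn w x" by (rule sub_le_Tm[OF lam s])
  also have "\<dots> \<le> Tm lam M p nn (itr lam M p nn k) x"
    using Suc itr_props[OF lam, of M p nn k] by (intro Tm_mono[OF lam]) auto
  finally show ?case by simp
qed

lemma exists_max_solution:
  assumes lam: "lam > 0" and s: "subsol lam M p nn (w :: int ^ 'n \<Rightarrow> real)"
  shows "\<exists>U :: int ^ 'n \<Rightarrow> real. (\<forall>x. lap U x = Fn lam (U x) + src M p nn x) \<and> (\<forall>x. U x \<le> 0)
           \<and> (\<forall>w'. subsol lam M p nn w' \<longrightarrow> (\<forall>x. w' x \<le> U x))"
proof -
  let ?I = "itr lam M p nn"
  have conv: "convergent (\<lambda>k. ?I k x)" for x
  proof -
    have "decseq (\<lambda>k. ?I k x)"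
      by (rule decseq_SucI) (use itr_props[OF lam] in blast)
    moreover have "\<forall>k. w x \<le> ?I k x" using sub_le_itr[OF lam s] by blast
    ultimately obtain L where "(\<lambda>k. ?I k x) \<longlonglongrightarrow> L" by (rule decseq_convergent)
    then show ?thesis by (auto simp: convergent_def)
  qed
  define U where "U x = lim (\<lambda>k. ?I k x)" for x
  have lim: "(\<lambda>k. ?I k x) \<longlonglongrightarrow> U x" for x
    unfolding U_def using conv convergent_LIMSEQ_iff by blast
  have U0: "U x \<le> 0" for x
    by (rule LIMSEQ_le_const2[OF lim]) (use itr_props[OF lam] in blast)
  have Umax: "w' x \<le> U x" if "subsol lam M p nn w'" for w' x
    by (rule LIMSEQ_le_const[OF lim]) (use sub_le_itr[OF lam that] in blast)
  have fixU: "U x = Tm lam M p nn U x" for x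
  proof -
    have l1: "(\<lambda>k. ?I (Suc k) x) \<longlonglongrightarrow> U x" using lim by (rule LIMSEQ_Suc)
    have "(\<lambda>k. Tm lam M p nn (?I k) x) \<longlonglongrightarrow> Tm lam M p nn U x"
      unfolding Tm_def nbsum_def Fn_def
      using lam by (intro tendsto_intros lim) auto
    then have "(\<lambda>k. ?I (Suc k) x) \<longlonglongrightarrow> Tm lam M p nn U x" by simp
    with l1 show ?thesis by (rule LIMSEQ_unique)
  qed
  show ?thesis
    using Tm_fix[OF lam fixU] U0 Umax by blast
qed

lemma finite_box: "finite {x :: int ^ 'n. \<forall>i. \<bar>x $ i\<bar> \<le> N}"
proof -
  let ?B = "{x :: int ^ 'n. \<forall>i. \<bar>x $ i\<bar> \<le> N}"
  have "vec_nth ` ?B \<subseteq> PiE UNIV (\<lambda>_. {-N..N})"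
  proof
    fix g assume "g \<in> vec_nth ` ?B"
    then obtain x where "x \<in> ?B" "g = vec_nth x" by blast
    then show "g \<in> PiE UNIV (\<lambda>_. {-N..N})"
      by (auto simp: PiE_def extensional_def abs_le_iff) (metis minus_le_iff)
  qed
  then have "finite (vec_nth ` ?B)"
    by (rule finite_subset) (simp add: finite_PiE)
  moreover have "inj_on vec_nth ?B" by (auto simp: inj_on_def vec_eq_iff)
  ultimately show ?thesis using finite_imageD by blast
qed

lemma lnorm_eq: "lnorm x = (\<Sum>i\<in>UNIV. \<bar>x $ i\<bar>)"
  by (simp add: lnorm_def ldist_def)

lemma coord_le_lnorm: "\<bar>x $ i\<bar> \<le> lnorm x"
  unfolding lnorm_eq by (rule member_le_sum) auto

lemma finite_lnorm_ball: "finite {x :: int ^ 'n. lnorm x < R}"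
  by (rule finite_subset[OF _ finite_box[of R]]) (auto intro: order_trans[OF coord_le_lnorm])

lemma vanish_finite:
  assumes "vanish_at_infinity f" and "e > 0"
  shows "finite {x :: int ^ 'n. \<bar>f x\<bar> \<ge> e}"
proof -
  obtain R where R: "\<And>x. lnorm x \<ge> R \<Longrightarrow> \<bar>f x\<bar> < e"
    using assms unfolding vanish_at_infinity_def by blast
  have "{x. \<bar>f x\<bar> \<ge> e} \<subseteq> {x. lnorm x < R}"
  proof
    fix x assume "x \<in> {x. \<bar>f x\<bar> \<ge> e}"
    then have "\<not> \<bar>f x\<bar> < e" by simp
    then show "x \<in> {x. lnorm x < R}" using R[of x] by force
  qed
  then show ?thesis using finite_lnorm_ball finite_subset by blast
qed

lemma sol_le0:
  assumes lam: "lam > 0" and f: "cs_solution lam M p nn (f :: int ^ 'n \<Rightarrow> real)"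
  shows "f x \<le> 0"
proof (rule ccontr)
  assume "\<not> f x \<le> 0"
  then have pos: "f x > 0" by simp
  have eq: "\<And>x. lap f x = Fn lam (f x) + src M p nn x" and van: "vanish_at_infinity f"
    using f unfolding cs_solution_def Fn_def src_def by auto
  let ?P = "{y. \<bar>f y\<bar> \<ge> f x}"
  have fin: "finite ?P" by (rule vanish_finite[OF van pos])
  have xin: "x \<in> ?P" using pos by simp
  define m where "m = Max (f ` ?P)"
  have "m \<in> f ` ?P" unfolding m_def using fin xin by (intro Max_in) auto
  then obtain x1 where x1: "x1 \<in> ?P" "f x1 = m" by blast
  have ge: "f y \<le> m" for y
  proof (cases "y \<in> ?P")
    case True then show ?thesis unfolding m_def using fin by (intro Max_ge) auto
  next
    case False
    then have "f y < f x" by auto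
    moreover have "f x \<le> m" unfolding m_def using fin xin by (intro Max_ge) auto
    ultimately show ?thesis by simp
  qed
  have "lap f x1 \<le> 0" unfolding lap_def using ge x1(2) by (intro sum_nonpos) auto
  moreover have "f x1 \<ge> f x" using ge[of x] x1(2) by simp
  then have "f x1 > 0" using pos by simp
  then have "Fn lam (f x1) > 0" unfolding Fn_def using lam by (simp add: mult_pos_pos)
  then have "lap f x1 > 0" using eq[of x1] src_nonneg[of M p nn x1] by simp
  ultimately show False by simp
qed

lemma sol_subsol:
  assumes lam: "lam > 0" and f: "cs_solution lam M p nn (f :: int ^ 'n \<Rightarrow> real)"
  shows "subsol lam M p nn f"
  using sol_le0[OF assms] f unfolding subsol_def cs_solution_def Fn_def src_def by auto

lemma lnorm_plus: "lnorm (x + axis i 1) = lnorm x + (\<bar>x $ i + 1\<bar> - \<bar>x $ i\<bar>)"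
proof -
  have "(\<Sum>j\<in>UNIV. \<bar>(x + axis i 1) $ j\<bar>) = (\<Sum>j\<in>UNIV. \<bar>x $ j\<bar> + (if j = i then \<bar>x $ i + 1\<bar> - \<bar>x $ i\<bar> else 0))"
    by (intro sum.cong) (auto simp: axis_nth)
  then show ?thesis unfolding lnorm_eq by (simp add: sum.distrib)
qed

lemma lnorm_minus: "lnorm (x - axis i 1) = lnorm x + (\<bar>x $ i - 1\<bar> - \<bar>x $ i\<bar>)"
proof -
  have "(\<Sum>j\<in>UNIV. \<bar>(x - axis i 1) $ j\<bar>) = (\<Sum>j\<in>UNIV. \<bar>x $ j\<bar> + (if j = i then \<bar>x $ i - 1\<bar> - \<bar>x $ i\<bar> else 0))"
    by (intro sum.cong) (auto simp: axis_nth)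
  then show ?thesis unfolding lnorm_eq by (simp add: sum.distrib)
qed

lemma lap_sum: "lap u x = (\<Sum>i\<in>UNIV. u (x + axis i 1) + u (x - axis i 1) - 2 * u x)"
  unfolding lap_eq by (simp add: sum.distrib[symmetric] algebra_simps)

lemma radial_lap:
  fixes g :: "int \<Rightarrow> real"
  assumes mono: "\<And>s s'. s \<le> s' \<Longrightarrow> g s \<le> g s'"
  shows "lap (\<lambda>y. g (lnorm y)) (x :: int ^ 'n) \<ge>
     real CARD('n) * (g (lnorm x + 1) + g (lnorm x - 1) - 2 * g (lnorm x))"
proof -
  let ?r = "lnorm x"
  have trm: "g (lnorm (x + axis i 1)) + g (lnorm (x - axis i 1)) - 2 * g ?r \<ge> g (?r + 1) + g (?r - 1) - 2 * g ?r" for i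
  proof (cases "x $ i > 0")
    case True
    then have "lnorm (x + axis i 1) = ?r + 1" "lnorm (x - axis i 1) = ?r - 1"
      by (simp_all add: lnorm_plus lnorm_minus)
    then show ?thesis by simp
  next
    case False
    show ?thesis
    proof (cases "x $ i < 0")
      case True
      then have "lnorm (x + axis i 1) = ?r - 1" "lnorm (x - axis i 1) = ?r + 1"
        by (simp_all add: lnorm_plus lnorm_minus)
      then show ?thesis by simp
    next
      case False2: False
      then have "x $ i = 0" using False by simp
      then have "lnorm (x + axis i 1) = ?r + 1" "lnorm (x - axis i 1) = ?r + 1"
        by (simp_all add: lnorm_plus lnorm_minus)
      moreover have "g (?r - 1) \<le> g (?r + 1)" by (rule mono) simp
      ultimately show ?thesis by simp
    qed
  qed
  have "lap (\<lambda>y. g (lnorm y)) x \<ge> (\<Sum>i\<in>(UNIV::'n set). g (?r + 1) + g (?r - 1) - 2 * g ?r)"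
    unfolding lap_sum by (rule sum_mono) (rule trm)
  then show ?thesis by simp
qed

definition phi :: "real \<Rightarrow> real \<Rightarrow> int \<Rightarrow> int ^ 'n \<Rightarrow> real" where
  "phi A t R0 x = - A * (1 / (1 + t)) ^ nat (lnorm x - R0)"

lemma phi_sub:
  fixes x :: "int ^ 'n"
  assumes lam: "lam > 0" and A: "A \<ge> 0" and t: "t > 0"
    and cond: "lnorm x \<le> R0 \<or> real CARD('n) * t^2 \<le> lam * exp (2 * phi A t R0 x) * (1 + t)"
  shows "lap (phi A t R0) x \<ge> Fn lam (phi A t R0 x)"
proof -
  define a where "a = 1 / (1 + t)"
  have a0: "a > 0" and a1: "a \<le> 1" using t by (auto simp: a_def)
  define g where "g s = - A * a ^ nat (s - R0)" for s
  have phig: "phi A t R0 = (\<lambda>y. g (lnorm y))" by (auto simp: phi_def g_def a_def)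
  have mono: "g s \<le> g s'" if "s \<le> s'" for s s'
  proof -
    have "a ^ nat (s' - R0) \<le> a ^ nat (s - R0)"
      using that a0 a1 by (intro power_decreasing) auto
    then show ?thesis unfolding g_def using A by (simp add: mult_left_mono)
  qed
  let ?r = "lnorm x"
  have lapb: "lap (phi A t R0) x \<ge> real CARD('n) * (g (?r + 1) + g (?r - 1) - 2 * g ?r)"
    unfolding phig by (rule radial_lap) (rule mono)
  have phile0: "phi A t R0 x \<le> 0" unfolding phi_def using A t by simp
  show ?thesis
  proof (cases "?r \<le> R0")
    case True
    then have "g (?r - 1) = g ?r" unfolding g_def by simp
    moreover have "g ?r \<le> g (?r + 1)" by (rule mono) simp
    ultimately have "g (?r + 1) + g (?r - 1) - 2 * g ?r \<ge> 0" by simp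
    then have "real CARD('n) * (g (?r + 1) + g (?r - 1) - 2 * g ?r) \<ge> 0" by simp
    then have "lap (phi A t R0) x \<ge> 0" using lapb by linarith
    then show ?thesis using Fn_le0[of lam "phi A t R0 x"] lam phile0 by simp
  next
    case False
    then have c: "real CARD('n) * t^2 \<le> lam * exp (2 * phi A t R0 x) * (1 + t)" using cond by simp
    define k where "k = nat (?r - R0)"
    have k1: "k \<ge> 1" using False by (simp add: k_def)
    have e1: "nat (?r + 1 - R0) = k + 1" "nat (?r - 1 - R0) = k - 1" using False by (simp_all add: k_def)
    obtain j where kj: "k = Suc j" using k1 by (cases k) auto
    have "g (?r + 1) + g (?r - 1) - 2 * g ?r = - A * a ^ j * (a * a - 2 * a + 1)"
      unfolding g_def e1 k_def[symmetric] kj by (simp add: algebra_simps)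
    also have "\<dots> = g ?r * (t^2 / (1 + t))"
    proof -
      have h1: "1 - a = t / (1 + t)" unfolding a_def using t by (simp add: field_simps)
      have "a * a - 2 * a + 1 = (1 - a) * (1 - a)" by (simp add: algebra_simps)
      also have "\<dots> = (t * t) / ((1 + t) * (1 + t))" unfolding h1 by simp
      also have "\<dots> = a * (t^2 / (1 + t))" unfolding a_def by (simp add: power2_eq_square)
      finally have "a * a - 2 * a + 1 = a * (t^2 / (1 + t))" .
      then show ?thesis unfolding g_def k_def[symmetric] kj by (simp add: algebra_simps)
    qed
    finally have d2: "g (?r + 1) + g (?r - 1) - 2 * g ?r = phi A t R0 x * (t^2 / (1 + t))"
      using phig by (metis (no_types))
    have "real CARD('n) * (t^2 / (1 + t)) \<le> lam * exp (2 * phi A t R0 x)"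
      using c t by (simp add: field_simps)
    then have "phi A t R0 x * (lam * exp (2 * phi A t R0 x)) \<le> phi A t R0 x * (real CARD('n) * (t^2 / (1 + t)))"
      using phile0 by (rule mult_left_mono_neg)
    moreover have "Fn lam (phi A t R0 x) \<le> lam * phi A t R0 x * exp (2 * phi A t R0 x)"
      using Fn_le_lin lam phile0 by simp
    moreover have "lap (phi A t R0) x \<ge> phi A t R0 x * (real CARD('n) * (t^2 / (1 + t)))"
      using lapb unfolding d2 by (simp add: algebra_simps)
    ultimately show ?thesis by (simp add: algebra_simps)
  qed
qed

definition Sq :: "int ^ 'n \<Rightarrow> int ^ 'n \<Rightarrow> real" where
  "Sq q x = (\<Sum>i\<in>UNIV. (real_of_int (x $ i - q $ i))^2)"

lemma Sq_nonneg: "Sq q x \<ge> 0" unfolding Sq_def by (simp add: sum_nonneg)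

lemma Sq_plus: "Sq q (x + axis i 1) = Sq q x + 2 * real_of_int (x $ i - q $ i) + 1"
proof -
  have "(\<Sum>j\<in>UNIV. (real_of_int ((x + axis i 1) $ j - q $ j))^2) =
        (\<Sum>j\<in>UNIV. (real_of_int (x $ j - q $ j))^2 + (if j = i then 2 * real_of_int (x $ i - q $ i) + 1 else 0))"
    by (intro sum.cong) (auto simp: axis_nth power2_eq_square algebra_simps)
  then show ?thesis unfolding Sq_def by (simp add: sum.distrib)
qed

lemma Sq_minus: "Sq q (x - axis i 1) = Sq q x - 2 * real_of_int (x $ i - q $ i) + 1"
proof -
  have "(\<Sum>j\<in>UNIV. (real_of_int ((x - axis i 1) $ j - q $ j))^2) =
        (\<Sum>j\<in>UNIV. (real_of_int (x $ j - q $ j))^2 + (if j = i then - 2 * real_of_int (x $ i - q $ i) + 1 else 0))"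
    by (intro sum.cong) (auto simp: axis_nth power2_eq_square algebra_simps)
  then show ?thesis unfolding Sq_def by (simp add: sum.distrib)
qed

lemma prod_ineq:
  fixes a :: "'i \<Rightarrow> real"
  assumes "finite I" "\<And>i. i \<in> I \<Longrightarrow> a i \<ge> 0" "sum a I \<le> A"
  shows "A * (\<Prod>i\<in>I. A - a i) \<ge> A ^ card I * (A - sum a I)"
  using assms
proof (induction I rule: finite_induct)
  case empty
  then show ?case by simp
next
  case (insert j I)
  have s: "sum a (insert j I) = a j + sum a I" using insert by simp
  have aj: "a j \<ge> 0" and sI: "sum a I \<ge> 0" using insert by (auto intro: sum_nonneg)
  have sIA: "sum a I \<le> A" using insert.prems(2) s aj by linarith
  have IH: "A * (\<Prod>i\<in>I. A - a i) \<ge> A ^ card I * (A - sum a I)"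
    using insert.prems(1) sIA by (intro insert.IH) auto
  have Aj: "A - a j \<ge> 0" using insert s sI by simp
  have A0: "A \<ge> 0" using insert.prems(2) s sI aj by linarith
  have "A * (\<Prod>i\<in>insert j I. A - a i) = (A - a j) * (A * (\<Prod>i\<in>I. A - a i))"
    using insert by (simp add: algebra_simps)
  also have "\<dots> \<ge> (A - a j) * (A ^ card I * (A - sum a I))"
    using IH Aj by (rule mult_left_mono)
  also have "(A - a j) * (A ^ card I * (A - sum a I)) = A ^ card I * ((A - a j) * (A - sum a I))"
    by simp
  also have "\<dots> \<ge> A ^ card I * (A * (A - a j - sum a I))"
  proof (rule mult_left_mono)
    show "A * (A - a j - sum a I) \<le> (A - a j) * (A - sum a I)"
      using aj sI by (simp add: algebra_simps)
    show "0 \<le> A ^ card I" using A0 by simp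
  qed
  also have "A ^ card I * (A * (A - a j - sum a I)) = A ^ card (insert j I) * (A - sum a (insert j I))"
    using insert s by simp
  finally show ?case .
qed

lemma big_prod_ineq:
  fixes t :: "'n::finite \<Rightarrow> real"
  assumes n2: "CARD('n) \<ge> 2" and Y: "Y = (\<Sum>i\<in>UNIV. (t i)^2) + 1"
  shows "(\<Prod>i\<in>UNIV. (Y + 1)^2 - 4 * (t i)^2) \<ge> Y ^ (2 * CARD('n))"
proof -
  define A where "A = (Y + 1)^2"
  define S where "S = (\<Sum>i\<in>UNIV. (t i)^2)"
  have S0: "S \<ge> 0" unfolding S_def by (simp add: sum_nonneg)
  have Y1: "Y \<ge> 1" using Y S0 S_def by simp
  have sa: "(\<Sum>i\<in>UNIV. 4 * (t i)^2) = 4 * S" unfolding S_def by (simp add: sum_distrib_left)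
  have A0: "A > 0" unfolding A_def using Y1 by simp
  have le: "4 * S \<le> A" unfolding A_def using Y S_def
    by (simp add: power2_eq_square algebra_simps)
  have "A * (\<Prod>i\<in>UNIV. A - 4 * (t i)^2) \<ge> A ^ CARD('n) * (A - 4 * S)"
    using prod_ineq[of UNIV "\<lambda>i. 4 * (t i)^2" A] le sa by simp
  obtain m where m: "CARD('n) = m + 2" using n2 by (metis add.commute le_Suc_ex)
  have "A * (\<Prod>i\<in>UNIV. A - 4 * (t i)^2) \<ge> A * (A ^ m * (A * (A - 4 * S)))"
    using \<open>A * _ \<ge> _\<close> unfolding m by (simp add: algebra_simps power_add power2_eq_square)
  then have P: "(\<Prod>i\<in>UNIV. A - 4 * (t i)^2) \<ge> A ^ m * (A * (A - 4 * S))"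
    using A0 by simp
  have "A * (A - 4 * S) = Y^4 + 2 * Y^2 + 8 * Y + 5"
    unfolding A_def using Y S_def by (simp add: power2_eq_square algebra_simps power4_eq_xxxx)
  also have "\<dots> \<ge> Y^4" using Y1 by simp
  finally have q: "A * (A - 4 * S) \<ge> Y^4" .
  have r: "A ^ m \<ge> (Y^2) ^ m" unfolding A_def using Y1 by (intro power_mono) (auto simp: power2_eq_square)
  have e: "2 * CARD('n) = 2 * m + 4" using m by simp
  have "Y ^ (2 * CARD('n)) = Y ^ (2 * m) * Y ^ 4" unfolding e by (rule power_add)
  also have "\<dots> = (Y^2)^m * Y^4" by (simp add: power_mult)
  also have "\<dots> \<le> A ^ m * (A * (A - 4 * S))"
    using q r Y1 A0 by (intro mult_mono) auto
  also have "\<dots> \<le> (\<Prod>i\<in>UNIV. A - 4 * (t i)^2)" by (rule P)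
  finally show ?thesis unfolding A_def .
qed

definition Lg :: "int ^ 'n \<Rightarrow> int ^ 'n \<Rightarrow> real" where
  "Lg q x = ln (Sq q x + 1)"

lemma Lg_lap:
  fixes q x :: "int ^ 'n"
  assumes n2: "CARD('n) \<ge> 2"
  shows "lap (Lg q) x \<ge> 2 * real CARD('n) * ln 2 * ldelta q x"
proof -
  define t where "t i = real_of_int (x $ i - q $ i)" for i
  define Y where "Y = Sq q x + 1"
  have Y: "Y = (\<Sum>i\<in>UNIV. (t i)^2) + 1" unfolding Y_def Sq_def t_def by simp
  have Y1: "Y \<ge> 1" unfolding Y_def using Sq_nonneg[of q x] by simp
  have ti: "(t i)^2 \<le> Y - 1" for i
    unfolding Y by simp (rule member_le_sum, auto)
  have pos1: "Y + 1 + 2 * t i > 0" and pos2: "Y + 1 - 2 * t i > 0" for i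
  proof -
    have "(t i + 1)^2 \<ge> 0" "(t i - 1)^2 \<ge> 0" by simp_all
    then show "Y + 1 + 2 * t i > 0" "Y + 1 - 2 * t i > 0"
      using ti[of i] by (simp_all add: power2_eq_square algebra_simps)
  qed
  have term_eq: "Lg q (x + axis i 1) + Lg q (x - axis i 1) - 2 * Lg q x
      = ln ((Y + 1)^2 - 4 * (t i)^2) - ln (Y^2)" for i
  proof -
    have "Lg q (x + axis i 1) = ln (Y + 1 + 2 * t i)"
      unfolding Lg_def Sq_plus Y_def t_def by (simp add: algebra_simps)
    moreover have "Lg q (x - axis i 1) = ln (Y + 1 - 2 * t i)"
      unfolding Lg_def Sq_minus Y_def t_def by (simp add: algebra_simps)
    moreover have "Lg q x = ln Y" unfolding Lg_def Y_def by simp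
    moreover have "ln (Y + 1 + 2 * t i) + ln (Y + 1 - 2 * t i) = ln ((Y + 1)^2 - 4 * (t i)^2)"
    proof -
      have "(Y + 1 + 2 * t i) * (Y + 1 - 2 * t i) = (Y + 1)^2 - 4 * (t i)^2"
        by (simp add: power2_eq_square algebra_simps)
      then show ?thesis using ln_mult_pos[OF pos1[of i] pos2[of i]] by simp
    qed
    moreover have "2 * ln Y = ln (Y^2)" using Y1 by (simp add: ln_realpow)
    ultimately show ?thesis by simp
  qed
  have posP: "(Y + 1)^2 - 4 * (t i)^2 > 0" for i
  proof -
    have "(Y + 1)^2 - 4 * (t i)^2 = (Y + 1 + 2 * t i) * (Y + 1 - 2 * t i)"
      by (simp add: power2_eq_square algebra_simps)
    then show ?thesis using pos1[of i] pos2[of i] by simp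
  qed
  have lapeq: "lap (Lg q) x = ln (\<Prod>i\<in>UNIV. (Y + 1)^2 - 4 * (t i)^2) - real CARD('n) * ln (Y^2)"
  proof -
    have nz: "(Y + 1)^2 - 4 * (t i)^2 \<noteq> 0" for i using posP[of i] by linarith
    show ?thesis unfolding lap_sum term_eq
      by (subst ln_prod[OF _ nz]) (auto simp: sum_subtractf)
  qed
  show ?thesis
  proof (cases "x = q")
    case True
    then have t0: "t i = 0" for i unfolding t_def by simp
    have Y1': "Y = 1" unfolding Y using t0 by simp
    have "lap (Lg q) x = real CARD('n) * ln 4"
      unfolding lapeq using t0 Y1' by (simp add: ln_realpow)
    also have "ln (4::real) = 2 * ln 2"
      using ln_realpow[of 2 2] by simp
    finally show ?thesis using True by (simp add: ldelta_def)
  next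
    case False
    have p1: "Y ^ (2 * CARD('n)) > 0" using Y1 by simp
    have bp: "Y ^ (2 * CARD('n)) \<le> (\<Prod>i\<in>UNIV. (Y + 1)^2 - 4 * (t i)^2)"
      by (rule big_prod_ineq[OF n2 Y])
    have "ln (Y ^ (2 * CARD('n))) \<le> ln (\<Prod>i\<in>UNIV. (Y + 1)^2 - 4 * (t i)^2)"
      using ln_le_cancel_iff[OF p1 less_le_trans[OF p1 bp]] bp by simp
    moreover have "ln (Y ^ (2 * CARD('n))) = real CARD('n) * ln (Y^2)"
      using Y1 by (simp add: ln_realpow power_mult)
    ultimately have "lap (Lg q) x \<ge> 0" unfolding lapeq by simp
    then show ?thesis using False by (simp add: ldelta_def)
  qed
qed

lemma lap_lin:
  assumes "finite J"
  shows "lap (\<lambda>y. (\<Sum>j\<in>J. c j * f j y) - C) x = (\<Sum>j\<in>J. c j * lap (f j) x)"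
proof -
  have "lap (\<lambda>y. (\<Sum>j\<in>J. c j * f j y) - C) x = (\<Sum>y\<in>{y. ldist x y = 1}. \<Sum>j\<in>J. c j * (f j y - f j x))"
    unfolding lap_def by (intro sum.cong) (auto simp: sum_subtractf[symmetric] algebra_simps)
  also have "\<dots> = (\<Sum>j\<in>J. c j * lap (f j) x)"
    unfolding lap_def by (subst sum.swap) (simp add: sum_distrib_left)
  finally show ?thesis .
qed

lemma Lg_nonneg: "Lg q x \<ge> 0"
  unfolding Lg_def using Sq_nonneg[of q x] by simp

lemma ldist_sym: "ldist x y = ldist y x"
  unfolding ldist_def by (simp add: abs_minus_commute)

lemma ldist_tri: "ldist x z \<le> ldist x y + ldist y z"
  unfolding ldist_def by (simp add: sum.distrib[symmetric]) (rule sum_mono, simp)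

lemma lnorm_ldist: "lnorm x = ldist x 0" by (simp add: lnorm_def)

lemma Sq_ge_ldist: "Sq q x \<ge> real_of_int (ldist x q)"
proof -
  have "real_of_int \<bar>x $ i - q $ i\<bar> \<le> (real_of_int (x $ i - q $ i))^2" for i
  proof -
    define z where "z = x $ i - q $ i"
    have "\<bar>z\<bar> \<le> z^2"
    proof (cases "z = 0")
      case True then show ?thesis by simp
    next
      case False
      then have "\<bar>z\<bar> * 1 \<le> \<bar>z\<bar> * \<bar>z\<bar>" by (intro mult_left_mono) auto
      then show ?thesis by (simp add: power2_eq_square abs_mult_self_eq)
    qed
    then have "\<bar>x $ i - q $ i\<bar> \<le> (x $ i - q $ i)^2" unfolding z_def .
    then show ?thesis by (metis of_int_le_iff of_int_power)
  qed
  then show ?thesis unfolding Sq_def ldist_def by (simp add: sum_mono)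
qed

lemma sumsq_le:
  fixes a :: "'i \<Rightarrow> real"
  assumes "finite I" "\<And>i. i \<in> I \<Longrightarrow> a i \<ge> 0"
  shows "(\<Sum>i\<in>I. (a i)^2) \<le> (\<Sum>i\<in>I. a i)^2"
proof -
  have "(\<Sum>i\<in>I. (a i)^2) \<le> (\<Sum>i\<in>I. a i * (\<Sum>j\<in>I. a j))"
  proof (rule sum_mono)
    fix i assume i: "i \<in> I"
    have "a i \<le> (\<Sum>j\<in>I. a j)" using assms i by (intro member_le_sum) auto
    then show "(a i)^2 \<le> a i * (\<Sum>j\<in>I. a j)" using assms(2)[OF i]
      by (simp add: power2_eq_square mult_left_mono)
  qed
  also have "\<dots> = (\<Sum>i\<in>I. a i)^2" by (simp add: power2_eq_square sum_distrib_right)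
  finally show ?thesis .
qed

lemma Sq_le_ldist: "Sq q x \<le> (real_of_int (ldist x q))^2"
proof -
  have "Sq q x = (\<Sum>i\<in>UNIV. (real_of_int \<bar>x $ i - q $ i\<bar>)^2)" unfolding Sq_def by simp
  also have "\<dots> \<le> (\<Sum>i\<in>UNIV. real_of_int \<bar>x $ i - q $ i\<bar>)^2" by (rule sumsq_le) auto
  finally show ?thesis unfolding ldist_def by simp
qed

lemma ln_diff_le:
  fixes u v m :: real
  assumes "u > 0" "v > 0" "m > 0" "m \<le> u" "m \<le> v"
  shows "\<bar>ln u - ln v\<bar> \<le> \<bar>u - v\<bar> / m"
proof -
  have key: "ln a - ln b \<le> (a - b) / m" if "a > (0::real)" "b > 0" "m \<le> b" "b \<le> a" for a b
  proof -
    have "ln a - ln b = ln (a / b)" using ln_div[of a b] that by simp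
    also have "\<dots> \<le> a / b - 1" using that by (intro ln_le_minus_one) auto
    also have "\<dots> = (a - b) / b" using that by (simp add: field_simps)
    also have "\<dots> \<le> (a - b) / m" using that assms(3) by (intro divide_left_mono) auto
    finally show ?thesis .
  qed
  show ?thesis
  proof (cases "u \<ge> v")
    case True
    then have "ln u - ln v \<le> (u - v) / m" using key assms by auto
    moreover have "ln v \<le> ln u" using True assms by simp
    ultimately show ?thesis using True by simp
  next
    case False
    then have "ln v - ln u \<le> (v - u) / m" using key assms by auto
    moreover have "ln u \<le> ln v" using False assms by simp
    ultimately show ?thesis using False by simp
  qed
qed

lemma Lg_grad:
  assumes R: "R \<ge> 1" and S: "Sq q x \<ge> R" and y: "y = x + axis i 1 \<or> y = x - axis i 1"
  shows "\<bar>Lg q y - Lg q x\<bar> \<le> 6 / sqrt R"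
proof -
  define S where "S = Sq q x"
  define t where "t = real_of_int (x $ i - q $ i)"
  have S1: "S \<ge> 1" using R S S_def by simp
  have tS: "t^2 \<le> S" unfolding S_def Sq_def t_def by (rule member_le_sum) auto
  have at: "\<bar>t\<bar> \<le> sqrt S" using tS by (simp add: real_le_rsqrt)
  obtain s where s: "s = 1 \<or> s = -1" and Sy: "Sq q y = S + 2 * s * t + 1"
  proof (cases "y = x + axis i 1")
    case True then show ?thesis using that[of 1] by (simp add: Sq_plus S_def t_def)
  next
    case False then have "y = x - axis i 1" using y by simp
    then show ?thesis using that[of "-1"] by (simp add: Sq_minus S_def t_def)
  qed
  have st: "\<bar>2 * s * t + 1\<bar> \<le> 2 * \<bar>t\<bar> + 1" using s by auto
  have sq0: "(\<bar>t\<bar> - 2)^2 \<ge> 0" by simp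
  have sqe: "(\<bar>t\<bar> - 2)^2 = t^2 - 4 * \<bar>t\<bar> + 4"
    by (simp add: power2_eq_square algebra_simps abs_mult_self_eq)
  have stt: "2 * s * t \<ge> - 2 * \<bar>t\<bar>" using s by auto
  have low: "S / 2 \<le> S + 2 * s * t + 2" using tS sq0 sqe stt by linarith
  have "\<bar>Lg q y - Lg q x\<bar> = \<bar>ln (S + 2 * s * t + 2) - ln (S + 1)\<bar>"
    unfolding Lg_def Sy S_def by (simp add: algebra_simps)
  also have "\<dots> \<le> \<bar>(S + 2 * s * t + 2) - (S + 1)\<bar> / (S / 2)"
    using S1 low by (intro ln_diff_le) auto
  also have "\<dots> \<le> (2 * sqrt S + 1) / (S / 2)"
    using st at S1 by (intro divide_right_mono) auto
  also have "\<dots> \<le> 6 / sqrt S"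
  proof -
    define r where "r = sqrt S"
    have r1: "r \<ge> 1" unfolding r_def using S1 by simp
    have Sr: "S = r * r" unfolding r_def using S1 by simp
    have "(2 * sqrt S + 1) / (S / 2) = (2 * r + 1) / (S / 2)" by (simp add: r_def)
    also have "\<dots> = (4 * r + 2) / (r * r)" using r1 unfolding Sr by (simp add: field_simps)
    also have "\<dots> \<le> (6 * r) / (r * r)" using r1 by (intro divide_right_mono) auto
    also have "\<dots> = 6 / r" using r1 by (simp add: abs_of_nonneg)
    finally show ?thesis unfolding r_def .
  qed
  also have "\<dots> \<le> 6 / sqrt R" using R S S_def by (intro divide_left_mono) auto
  finally show ?thesis by simp
qed

lemma lap_max:
  assumes "f x \<ge> g x"
  shows "lap (\<lambda>z. max (f z) (g z)) x \<ge> lap f x"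
  unfolding lap_def using assms by (intro sum_mono) auto

lemma min_lip: "\<bar>min a (-1) - min b (-1)\<bar> \<le> \<bar>a - (b::real)\<bar>"
  by (auto simp: min_def)

lemma phi_le0: "A \<ge> 0 \<Longrightarrow> t > 0 \<Longrightarrow> phi A t R0 x \<le> 0"
  unfolding phi_def by simp

lemma phi_ge: "A \<ge> 0 \<Longrightarrow> t > 0 \<Longrightarrow> phi A t R0 x \<ge> - A"
proof -
  assume A: "A \<ge> 0" and t: "t > 0"
  have "(1 / (1 + t)) ^ nat (lnorm x - R0) \<le> 1" using t by (intro power_le_one) auto
  then show ?thesis unfolding phi_def using A by (simp add: mult_left_le)
qed

lemma phi_abs: "A \<ge> 0 \<Longrightarrow> t > 0 \<Longrightarrow> \<bar>phi A t R0 x\<bar> = A * (1 / (1 + t)) ^ nat (lnorm x - R0)"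
  unfolding phi_def by simp

lemma phi_vanish:
  assumes A: "A \<ge> 0" and t: "t > 0"
  shows "vanish_at_infinity (phi A t R0 :: int ^ 'n \<Rightarrow> real)"
  unfolding vanish_at_infinity_def
proof (intro allI impI)
  fix e :: real assume e: "e > 0"
  define a where "a = 1 / (1 + t)"
  have a0: "a > 0" "a < 1" using t by (auto simp: a_def)
  obtain k where k: "a ^ k < e / (A + 1)" using real_arch_pow_inv[of "e / (A + 1)" a] e A a0 by auto
  show "\<exists>R. \<forall>x :: int ^ 'n. lnorm x \<ge> R \<longrightarrow> \<bar>phi A t R0 x\<bar> < e"
  proof (intro exI allI impI)
    fix x :: "int ^ 'n" assume "lnorm x \<ge> R0 + int k"
    then have "k \<le> nat (lnorm x - R0)" by simp
    then have "a ^ nat (lnorm x - R0) \<le> a ^ k" using a0 by (intro power_decreasing) auto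
    then have "A * a ^ nat (lnorm x - R0) \<le> A * a ^ k" using A by (intro mult_left_mono) auto
    also have "\<dots> \<le> (A + 1) * a ^ k" using a0 by (intro mult_right_mono) auto
    also have "\<dots> < e" using k A by (simp add: field_simps)
    finally show "\<bar>phi A t R0 x\<bar> < e" using phi_abs[OF A t, of R0 x] by (simp add: a_def)
  qed
qed

lemma exists_subsol:
  fixes p :: "nat \<Rightarrow> int ^ 'n"
  assumes n2: "CARD('n) \<ge> 2" and lam: "lam > 0"
  shows "\<exists>w :: int ^ 'n \<Rightarrow> real. subsol lam M p nn w \<and> vanish_at_infinity w"
proof -
  define n where "n = real CARD('n)"
  have n0: "n \<ge> 2" using n2 unfolding n_def by linarith
  define J where "J = {1..M}"
  have finJ: "finite J" by (simp add: J_def)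
  define be where "be j = 2 * pi * real (nn j) / (n * ln 2)" for j
  have ln2: "ln (2::real) > 0" by simp
  have be0: "be j \<ge> 0" for j unfolding be_def using n0 ln2 by simp
  have be_eq: "be j * (2 * n * ln 2) = 4 * pi * real (nn j)" for j
    unfolding be_def using n0 ln2 by (simp add: field_simps)
  define B where "B = (\<Sum>j\<in>J. be j)"
  have B0: "B \<ge> 0" unfolding B_def by (simp add: sum_nonneg be0)
  define g0 where "g0 = min 1 (lam * exp (-4) / (2 * n))"
  have g0pos: "g0 > 0" unfolding g0_def using lam n0 by simp
  have g0le1: "g0 \<le> 1" unfolding g0_def by simp
  have g0b: "2 * n * g0 \<le> lam * exp (-4)"
  proof -
    have "g0 \<le> lam * exp (-4) / (2 * n)" unfolding g0_def by simp
    then show ?thesis using n0 by (simp add: field_simps)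
  qed
  define R where "R = (6 * B / g0)^2 + 1"
  have R1: "R \<ge> 1" unfolding R_def by simp
  have sR: "6 * B / sqrt R \<le> g0"
  proof -
    have "6 * B / g0 \<le> sqrt R" unfolding R_def
      by (rule real_le_rsqrt) simp
    then have "6 * B \<le> g0 * sqrt R" using g0pos by (simp add: field_simps)
    moreover have "sqrt R > 0" using R1 by simp
    ultimately show ?thesis by (simp add: field_simps)
  qed
  define Rl where "Rl = ceiling R"
  have Rl1: "Rl \<ge> 1" unfolding Rl_def using R1 by linarith
  have RlR: "real_of_int Rl \<ge> R" unfolding Rl_def by simp
  define P where "P = (\<Sum>j\<in>J. lnorm (p j))"
  have lnorm0: "lnorm y \<ge> 0" for y :: "int ^ 'n" unfolding lnorm_eq by (simp add: sum_nonneg)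
  have P_ge: "lnorm (p j) \<le> P" if "j \<in> J" for j
    unfolding P_def using finJ that lnorm0 by (intro member_le_sum) auto
  define D where "D = 1 + real_of_int Rl + 2 * real_of_int P"
  define C where "C = B * ln (D^2 + 1) + 1"
  have C1: "C \<ge> 1" unfolding C_def using B0 by simp
  define Psi where "Psi y = (\<Sum>j\<in>J. be j * Lg (p j) y) - C" for y
  define psi where "psi y = min (Psi y) (-1)" for y
  have psi_le: "psi y \<le> -1" for y unfolding psi_def by simp
  have Psi_ge: "Psi y \<ge> - C" for y
  proof -
    have "(\<Sum>j\<in>J. be j * Lg (p j) y) \<ge> 0" by (intro sum_nonneg mult_nonneg_nonneg be0 Lg_nonneg)
    then show ?thesis unfolding Psi_def by simp
  qed
  have psi_ge: "psi y \<ge> - C" for y unfolding psi_def using Psi_ge[of y] C1 by simp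
  have lapPsi: "lap Psi x \<ge> src M p nn x" for x
  proof -
    have "lap Psi x = (\<Sum>j\<in>J. be j * lap (Lg (p j)) x)"
      unfolding Psi_def by (rule lap_lin[OF finJ])
    also have "\<dots> \<ge> (\<Sum>j\<in>J. be j * (2 * n * ln 2 * ldelta (p j) x))"
      using Lg_lap[OF n2] be0 unfolding n_def by (intro sum_mono mult_left_mono) auto
    also have "(\<Sum>j\<in>J. be j * (2 * n * ln 2 * ldelta (p j) x)) = src M p nn x"
    proof -
      have "(\<Sum>j\<in>J. be j * (2 * n * ln 2 * ldelta (p j) x)) = (\<Sum>j\<in>J. 4 * pi * (real (nn j) * ldelta (p j) x))"
      proof (rule sum.cong)
        fix j
        have "be j * (2 * n * ln 2 * ldelta (p j) x) = (be j * (2 * n * ln 2)) * ldelta (p j) x"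
          by (simp add: algebra_simps)
        then show "be j * (2 * n * ln 2 * ldelta (p j) x) = 4 * pi * (real (nn j) * ldelta (p j) x)"
          unfolding be_eq by simp
      qed simp
      then show ?thesis unfolding src_def J_def by (simp add: sum_distrib_left)
    qed
    finally show ?thesis .
  qed
  have near: "Psi y \<le> -1" if j0: "j0 \<in> J" "ldist x (p j0) < Rl" and y: "ldist x y \<le> 1" for x y j0
  proof -
    have "Lg (p j) y \<le> ln (D^2 + 1)" if j: "j \<in> J" for j
    proof -
      have "ldist y (p j) \<le> ldist y x + ldist x (p j0) + ldist (p j0) 0 + ldist 0 (p j)"
        using ldist_tri[where x=y and y=x and z="p j"] ldist_tri[where x=x and y="p j0" and z="p j"]
          ldist_tri[where x="p j0" and y=0 and z="p j"] by linarith
      also have "\<dots> \<le> 1 + Rl + P + P"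
        using y j0 P_ge[OF j0(1)] P_ge[OF j] ldist_sym[of y x] ldist_sym[of 0 "p j"]
        unfolding lnorm_ldist by linarith
      finally have l1: "real_of_int (ldist y (p j)) \<le> D" unfolding D_def by linarith
      have l0: "ldist y (p j) \<ge> 0" unfolding ldist_def by (simp add: sum_nonneg)
      have "Sq (p j) y \<le> (real_of_int (ldist y (p j)))^2" by (rule Sq_le_ldist)
      also have "\<dots> \<le> D^2" using l0 l1 by (intro power_mono) auto
      finally have "Sq (p j) y + 1 \<le> D^2 + 1" by simp
      then show ?thesis unfolding Lg_def using Sq_nonneg[of "p j" y] by simp
    qed
    then have "(\<Sum>j\<in>J. be j * Lg (p j) y) \<le> (\<Sum>j\<in>J. be j * ln (D^2 + 1))"
      using be0 by (intro sum_mono mult_left_mono) auto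
    also have "\<dots> = B * ln (D^2 + 1)" unfolding B_def by (simp add: sum_distrib_right)
    finally show ?thesis unfolding Psi_def C_def by simp
  qed
  have far_src: "src M p nn x = 0" if far: "\<forall>j\<in>J. ldist x (p j) \<ge> Rl" for x
  proof (rule src_zero, intro ballI notI)
    fix j assume "j \<in> {1..M}" "x = p j"
    then have "ldist x (p j) = 0" by (simp add: ldist_def)
    then show False using far Rl1 \<open>j \<in> {1..M}\<close> unfolding J_def by force
  qed
  have far_grad: "\<bar>Psi y - Psi x\<bar> \<le> g0"
    if far: "\<forall>j\<in>J. ldist x (p j) \<ge> Rl" and y: "y = x + axis i 1 \<or> y = x - axis i 1" for x y i
  proof -
    have "\<bar>Psi y - Psi x\<bar> = \<bar>\<Sum>j\<in>J. be j * (Lg (p j) y - Lg (p j) x)\<bar>"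
      unfolding Psi_def by (simp add: sum_subtractf[symmetric] algebra_simps)
    also have "\<dots> \<le> (\<Sum>j\<in>J. \<bar>be j * (Lg (p j) y - Lg (p j) x)\<bar>)" by (rule sum_abs)
    also have "\<dots> \<le> (\<Sum>j\<in>J. be j * (6 / sqrt R))"
    proof (rule sum_mono)
      fix j assume j: "j \<in> J"
      have "Sq (p j) x \<ge> R"
      proof -
        have "real_of_int (ldist x (p j)) \<le> Sq (p j) x" by (rule Sq_ge_ldist)
        moreover have "Rl \<le> ldist x (p j)" using far j by blast
        then have "real_of_int Rl \<le> real_of_int (ldist x (p j))" by simp
        ultimately show ?thesis using RlR by linarith
      qed
      then have lg: "\<bar>Lg (p j) y - Lg (p j) x\<bar> \<le> 6 / sqrt R" by (rule Lg_grad[OF R1 _ y])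
      show "\<bar>be j * (Lg (p j) y - Lg (p j) x)\<bar> \<le> be j * (6 / sqrt R)"
        using be0[of j] mult_left_mono[OF lg be0[of j]] by (simp add: abs_mult)
    qed
    also have "\<dots> = 6 * B / sqrt R" unfolding B_def
      by (simp add: sum_distrib_right[symmetric] sum_divide_distrib[symmetric] mult.commute)
    also have "\<dots> \<le> g0" by (rule sR)
    finally show ?thesis .
  qed
  have psi_sub: "lap psi x \<ge> Fn lam (psi x) + src M p nn x" for x
  proof (cases "Psi x \<le> -1 \<and> (\<forall>y. ldist x y = 1 \<longrightarrow> Psi y \<le> -1)")
    case True
    have "lap psi x = lap Psi x"
      unfolding lap_def psi_def using True by (intro sum.cong) auto
    then have "lap psi x \<ge> src M p nn x" using lapPsi by simp
    moreover have "Fn lam (psi x) \<le> 0" using Fn_le0[of lam "psi x"] lam psi_le[of x] by simp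
    ultimately show ?thesis by simp
  next
    case False
    have far: "\<forall>j\<in>J. ldist x (p j) \<ge> Rl"
    proof (rule ccontr)
      assume "\<not> ?thesis"
      then obtain j0 where "j0 \<in> J" "ldist x (p j0) < Rl" by force
      then have "Psi y \<le> -1" if "ldist x y \<le> 1" for y using near that by blast
      moreover have "ldist x x \<le> 1" by (simp add: ldist_def)
      ultimately show False using False by force
    qed
    have s0: "src M p nn x = 0" by (rule far_src[OF far])
    have gr: "\<bar>Psi y - Psi x\<bar> \<le> g0" if "y = x + axis i 1 \<or> y = x - axis i 1" for y i
      by (rule far_grad[OF far that])
    have Px: "Psi x \<ge> -1 - g0"
    proof (cases "Psi x \<le> -1")
      case True
      then obtain y where y: "ldist x y = 1" "Psi y > -1" using False by force
      then obtain i where "y = x + axis i 1 \<or> y = x - axis i 1" using ldist_one_iff by blast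
      then have "\<bar>Psi y - Psi x\<bar> \<le> g0" by (rule gr)
      then show ?thesis using y by linarith
    next
      case False
      then show ?thesis using g0pos by simp
    qed
    have psix: "psi x \<ge> -2" "psi x \<le> -1"
      using Px g0le1 unfolding psi_def by auto
    have "lap psi x = (\<Sum>i\<in>UNIV. (psi (x + axis i 1) - psi x) + (psi (x - axis i 1) - psi x))"
      unfolding lap_eq by (simp only: sum.distrib)
    also have "\<dots> \<ge> (\<Sum>i\<in>(UNIV :: 'n set). - g0 + - g0)"
    proof (rule sum_mono)
      fix i
      have "\<bar>psi (x + axis i 1) - psi x\<bar> \<le> g0"
        using gr[of "x + axis i 1" i] min_lip[of "Psi (x + axis i 1)" "Psi x"] unfolding psi_def by simp
      moreover have "\<bar>psi (x - axis i 1) - psi x\<bar> \<le> g0"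
        using gr[of "x - axis i 1" i] min_lip[of "Psi (x - axis i 1)" "Psi x"] unfolding psi_def by simp
      ultimately show "- g0 + - g0 \<le> (psi (x + axis i 1) - psi x) + (psi (x - axis i 1) - psi x)"
        by linarith
    qed
    finally have "lap psi x \<ge> - (2 * n * g0)" unfolding n_def by simp
    then have l: "lap psi x \<ge> - (lam * exp (-4))" using g0b by linarith
    have "Fn lam (psi x) \<le> lam * psi x * exp (2 * psi x)"
      using Fn_le_lin[of lam "psi x"] lam psix by simp
    also have "\<dots> \<le> lam * (-1) * exp (2 * psi x)"
      using psix lam by (intro mult_right_mono mult_left_mono) auto
    also have "\<dots> \<le> - (lam * exp (-4))"
    proof -
      have "exp (-4) \<le> exp (2 * psi x)" using psix by simp
      then show ?thesis using lam by simp
    qed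
    finally show ?thesis using l s0 by simp
  qed
  define A where "A = C"
  have A0: "A \<ge> 0" unfolding A_def using C1 by simp
  define c where "c = lam * exp (- 2 * A) / n"
  have c0: "c > 0" unfolding c_def using lam n0 by simp
  define t where "t = c / (1 + c)"
  have t0: "t > 0" and t1: "t \<le> 1" and tc: "t \<le> c" unfolding t_def using c0
    by (auto simp: field_simps)
  have tsq: "t^2 \<le> c"
  proof -
    have "t * t \<le> c * 1" using t0 t1 tc by (intro mult_mono) auto
    then show ?thesis by (simp add: power2_eq_square)
  qed
  define R0 where "R0 = P"
  define ph where "ph = (phi A t R0 :: int ^ 'n \<Rightarrow> real)"
  have ph_sub: "lap ph x \<ge> Fn lam (ph x)" for x
  proof -
    have "n * t^2 \<le> n * c" using tsq n0 by simp
    also have "\<dots> = lam * exp (- 2 * A)" unfolding c_def using n0 by simp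
    also have "\<dots> \<le> lam * exp (2 * ph x)"
      using phi_ge[OF A0 t0, of R0 x] lam unfolding ph_def by simp
    also have "\<dots> \<le> lam * exp (2 * ph x) * (1 + t)"
    proof -
      have "lam * exp (2 * ph x) \<ge> 0" using lam by simp
      then show ?thesis using t0 by (simp add: mult_le_cancel_left1)
    qed
    finally have "real CARD('n) * t^2 \<le> lam * exp (2 * phi A t R0 x) * (1 + t)"
      unfolding n_def ph_def .
    then show ?thesis unfolding ph_def by (intro phi_sub[OF lam A0 t0]) auto
  qed
  have ph_src: "ph (p j) = - A" if "j \<in> J" for j
    using P_ge[OF that] unfolding ph_def phi_def R0_def by simp
  define w where "w y = max (psi y) (ph y)" for y
  have "subsol lam M p nn w"
    unfolding subsol_def
  proof (intro conjI allI)
    fix x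
    show "w x \<le> 0" unfolding w_def using psi_le[of x] phi_le0[OF A0 t0] unfolding ph_def by simp
    show "Fn lam (w x) + src M p nn x \<le> lap w x"
    proof (cases "psi x \<ge> ph x")
      case True
      have "lap w x \<ge> lap psi x" unfolding w_def using True by (rule lap_max)
      then show ?thesis using psi_sub[of x] True unfolding w_def by simp
    next
      case False
      have s0: "src M p nn x = 0"
      proof (rule src_zero, intro ballI notI)
        fix j assume j: "j \<in> {1..M}" and "x = p j"
        then have "ph x = - A" using ph_src unfolding J_def by simp
        then show False using False psi_ge[of x] unfolding A_def by simp
      qed
      have "w = (\<lambda>z. max (ph z) (psi z))" unfolding w_def by (auto simp: max.commute)
      then have "lap w x \<ge> lap ph x" using False lap_max[of psi x ph] by simp
      then show ?thesis using ph_sub[of x] s0 False unfolding w_def by simp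
    qed
  qed
  moreover have "vanish_at_infinity w"
  proof -
    have v: "vanish_at_infinity ph" unfolding ph_def by (rule phi_vanish[OF A0 t0])
    show ?thesis unfolding vanish_at_infinity_def
    proof (intro allI impI)
      fix e :: real assume "e > 0"
      then obtain R' where R': "\<forall>x. lnorm x \<ge> R' \<longrightarrow> \<bar>ph x\<bar> < e"
        using v unfolding vanish_at_infinity_def by blast
      have "\<bar>w x\<bar> \<le> \<bar>ph x\<bar>" for x
        unfolding w_def using psi_le[of x] phi_le0[OF A0 t0] unfolding ph_def by auto
      then show "\<exists>R. \<forall>x. lnorm x \<ge> R \<longrightarrow> \<bar>w x\<bar> < e" using R' by (meson order_le_less_trans)
    qed
  qed
  ultimately show ?thesis by blast
qed

lemma geo1:
  fixes b :: real
  assumes b0: "0 \<le> b" and b1: "b < 1" and N: "N \<ge> 0"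
  shows "(\<Sum>z\<in>{-N..N}. b ^ nat \<bar>z\<bar>) \<le> 2 / (1 - b)"
proof -
  have g: "(\<Sum>z\<in>{0..N}. b ^ nat \<bar>z\<bar>) \<le> 1 / (1 - b)"
  proof -
    have "{0..N} = int ` {..<Suc (nat N)}" using N
      by (auto simp: image_iff intro!: bexI[of _ "nat _"])
    then have "(\<Sum>z\<in>{0..N}. b ^ nat \<bar>z\<bar>) = (\<Sum>k\<in>{..<Suc (nat N)}. b ^ k)"
      by (simp add: sum.reindex)
    also have "\<dots> = (1 - b ^ Suc (nat N)) / (1 - b)" by (subst sum_gp_strict) (use b1 in simp)
    also have "\<dots> \<le> 1 / (1 - b)" using b0 b1 by (intro divide_right_mono) auto
    finally show ?thesis .
  qed
  have sub: "{-N..N} \<subseteq> {0..N} \<union> uminus ` {0..N}"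
    by (auto simp: image_iff)
  have "(\<Sum>z\<in>{-N..N}. b ^ nat \<bar>z\<bar>) \<le> (\<Sum>z\<in>{0..N} \<union> uminus ` {0..N}. b ^ nat \<bar>z\<bar>)"
    using sub b0 by (intro sum_mono2) auto
  also have "\<dots> \<le> (\<Sum>z\<in>{0..N}. b ^ nat \<bar>z\<bar>) + (\<Sum>z\<in>uminus ` {0..N}. b ^ nat \<bar>z\<bar>)"
  proof -
    have "(\<Sum>z\<in>{0..N} \<union> uminus ` {0..N}. b ^ nat \<bar>z\<bar>) + (\<Sum>z\<in>{0..N} \<inter> uminus ` {0..N}. b ^ nat \<bar>z\<bar>)
        = (\<Sum>z\<in>{0..N}. b ^ nat \<bar>z\<bar>) + (\<Sum>z\<in>uminus ` {0..N}. b ^ nat \<bar>z\<bar>)"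
      by (rule sum.union_inter) auto
    moreover have "(\<Sum>z\<in>{0..N} \<inter> uminus ` {0..N}. b ^ nat \<bar>z\<bar>) \<ge> 0" using b0 by (simp add: sum_nonneg)
    ultimately show ?thesis by linarith
  qed
  also have "(\<Sum>z\<in>uminus ` {0..N}. b ^ nat \<bar>z\<bar>) = (\<Sum>z\<in>{0..N}. b ^ nat \<bar>z\<bar>)"
  proof -
    have inj: "inj_on uminus {0..N::int}" by (simp add: inj_on_def)
    show ?thesis by (simp only: sum.reindex[OF inj] o_def abs_minus_cancel)
  qed
  finally show ?thesis using g by simp
qed

lemma nat_lnorm: "nat (lnorm x) = (\<Sum>i\<in>UNIV. nat \<bar>x $ i\<bar>)"
proof -
  have "lnorm x = (\<Sum>i\<in>UNIV. int (nat \<bar>x $ i\<bar>))" unfolding lnorm_eq by simp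
  also have "\<dots> = int (\<Sum>i\<in>UNIV. nat \<bar>x $ i\<bar>)" by simp
  finally show ?thesis by (metis nat_int)
qed

lemma geo_summable:
  fixes b :: real
  assumes b0: "0 \<le> b" and b1: "b < 1"
  shows "(\<lambda>x :: int ^ 'n. b ^ nat (lnorm x)) summable_on UNIV"
proof (rule nonneg_bdd_above_summable_on)
  show "\<And>x. x \<in> UNIV \<Longrightarrow> 0 \<le> b ^ nat (lnorm x)" using b0 by simp
  show "bdd_above (sum (\<lambda>x :: int ^ 'n. b ^ nat (lnorm x)) ` {F. F \<subseteq> UNIV \<and> finite F})"
  proof (rule bdd_aboveI2)
    fix F :: "(int ^ 'n) set" assume "F \<in> {F. F \<subseteq> UNIV \<and> finite F}"
    then have finF: "finite F" by simp
    define N where "N = (\<Sum>x\<in>F. lnorm x)"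
    have lnorm0: "lnorm y \<ge> 0" for y :: "int ^ 'n" unfolding lnorm_eq by (simp add: sum_nonneg)
    have N0: "N \<ge> 0" unfolding N_def using lnorm0 by (simp add: sum_nonneg)
    define Bx where "Bx = {x :: int ^ 'n. \<forall>i. \<bar>x $ i\<bar> \<le> N}"
    have FB: "F \<subseteq> Bx"
    proof
      fix x assume x: "x \<in> F"
      have "lnorm x \<le> N" unfolding N_def using finF x lnorm0 by (intro member_le_sum) auto
      then show "x \<in> Bx" unfolding Bx_def using coord_le_lnorm order_trans by blast
    qed
    define PE where "PE = PiE (UNIV :: 'n set) (\<lambda>_. {-N..N})"
    have BxPE: "Bx = vec_lambda ` PE"
    proof
      show "Bx \<subseteq> vec_lambda ` PE"
      proof
        fix x assume "x \<in> Bx"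
        then have "\<bar>x $ i\<bar> \<le> N" for i unfolding Bx_def by simp
        then have "x $ i \<in> {-N..N}" for i by (simp add: abs_le_iff) (metis minus_le_iff)
        then have "vec_nth x \<in> PE" unfolding PE_def by (auto simp: PiE_def extensional_def)
        moreover have "x = vec_lambda (vec_nth x)" by simp
        ultimately show "x \<in> vec_lambda ` PE" by blast
      qed
      show "vec_lambda ` PE \<subseteq> Bx"
      proof
        fix x assume "x \<in> vec_lambda ` PE"
        then obtain g where g: "g \<in> PE" "x = vec_lambda g" by blast
        have "\<bar>x $ i\<bar> \<le> N" for i
        proof -
          have "g i \<in> {-N..N}" using g(1) unfolding PE_def by auto
          then show ?thesis using g(2) by (simp add: abs_le_iff)
        qed
        then show "x \<in> Bx" unfolding Bx_def by simp
      qed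
    qed
    have inj: "inj_on vec_lambda PE"
      by (rule inj_onI) (metis vec_lambda_inverse UNIV_I)
    have "sum (\<lambda>x. b ^ nat (lnorm x)) F \<le> sum (\<lambda>x. b ^ nat (lnorm x)) Bx"
      using FB b0 finite_box[of N] unfolding Bx_def by (intro sum_mono2) auto
    also have "\<dots> = (\<Sum>g\<in>PE. b ^ nat (lnorm (vec_lambda g)))"
      unfolding BxPE using inj by (simp add: sum.reindex)
    also have "\<dots> = (\<Sum>g\<in>PE. \<Prod>i\<in>UNIV. b ^ nat \<bar>g i\<bar>)"
      by (intro sum.cong refl) (simp add: nat_lnorm power_sum)
    also have "\<dots> = (\<Prod>i\<in>(UNIV :: 'n set). \<Sum>z\<in>{-N..N}. b ^ nat \<bar>z\<bar>)"
      unfolding PE_def by (rule prod_sum_PiE[symmetric]) auto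
    also have "\<dots> \<le> (\<Prod>i\<in>(UNIV :: 'n set). 2 / (1 - b))"
      using geo1[OF b0 b1 N0] b0 by (intro prod_mono) (auto intro: sum_nonneg)
    finally show "sum (\<lambda>x. b ^ nat (lnorm x)) F \<le> (2 / (1 - b)) ^ CARD('n)" by simp
  qed
qed

lemma decay_bound:
  fixes U :: "int ^ 'n \<Rightarrow> real" and p :: "nat \<Rightarrow> int ^ 'n"
  assumes lam: "lam > 0"
    and Usol: "\<And>x. lap U x = Fn lam (U x) + src M p nn x"
    and U0: "\<And>x. U x \<le> 0" and Uvan: "vanish_at_infinity U"
    and Umax: "\<And>w. subsol lam M p nn w \<Longrightarrow> \<forall>x. w x \<le> U x"
  shows "\<exists>A \<ge> 0. \<forall>x. \<bar>U x\<bar> \<le> A * (1 / (1 + lam / (2 * real CARD('n)))) ^ nat (lnorm x)"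
proof -
  define n where "n = real CARD('n)"
  have n1: "n \<ge> 1" unfolding n_def by simp
  define t0 where "t0 = lam / (2 * n)"
  have t0: "t0 > 0" unfolding t0_def using lam n1 by simp
  define a0 where "a0 = 1 / (1 + t0)"
  have a0: "a0 > 0" using t0 by (simp add: a0_def)
  define K where "K = {x. \<bar>U x\<bar> \<ge> 1/4} \<union> p ` {1..M}"
  have finK: "finite K" unfolding K_def using vanish_finite[OF Uvan, of "1/4"] by simp
  define A where "A = (\<Sum>x\<in>K. (- U x) / a0 ^ nat (lnorm x))"
  have trm0: "(- U x) / a0 ^ nat (lnorm x) \<ge> 0" for x
    using U0[of x] a0 by (intro divide_nonneg_pos) auto
  have A0: "A \<ge> 0" unfolding A_def using trm0 by (simp add: sum_nonneg)
  have AK: "- U x \<le> A * a0 ^ nat (lnorm x)" if "x \<in> K" for x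
  proof -
    have "(- U x) / a0 ^ nat (lnorm x) \<le> A" unfolding A_def
      using finK that trm0 by (intro member_le_sum) auto
    then show ?thesis using a0 by (simp add: field_simps)
  qed
  define v where "v = (phi A t0 0 :: int ^ 'n \<Rightarrow> real)"
  have v_eq: "v x = - A * a0 ^ nat (lnorm x)" for x unfolding v_def phi_def a0_def by simp
  have vK: "v x \<le> U x" if "x \<in> K" for x using AK[OF that] v_eq[of x] by simp
  define w where "w x = max (U x) (v x)" for x
  have "subsol lam M p nn w"
    unfolding subsol_def
  proof (intro conjI allI)
    fix x
    show "w x \<le> 0" unfolding w_def v_def using U0[of x] phi_le0[OF A0 t0] by simp
    show "Fn lam (w x) + src M p nn x \<le> lap w x"
    proof (cases "U x \<ge> v x")
      case True
      have "lap w x \<ge> lap U x" unfolding w_def using True by (rule lap_max)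
      then show ?thesis using Usol[of x] True unfolding w_def by simp
    next
      case False
      then have xK: "x \<notin> K" using vK by force
      then have s0: "src M p nn x = 0" unfolding K_def by (intro src_zero) auto
      have Ux: "U x > -1/4" using xK U0[of x] unfolding K_def by auto
      have vx: "v x \<ge> -1/4" using False Ux by simp
      have "lap v x \<ge> Fn lam (v x)"
        unfolding v_def
      proof (rule phi_sub[OF lam A0 t0], rule disjI2)
        have "exp (2 * phi A t0 0 x) \<ge> exp (-1/2)" using vx unfolding v_def by simp
        moreover have "exp (-1/2 :: real) \<ge> 1/2" using exp_ge_add_one_self[of "-1/2"] by simp
        ultimately have e: "exp (2 * phi A t0 0 x) \<ge> 1/2" by linarith
        have "real CARD('n) * t0^2 = lam * t0 / 2"
          unfolding t0_def n_def using lam by (simp add: power2_eq_square field_simps)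
        also have "\<dots> \<le> lam * (1/2) * (1 + t0)" using lam t0 by (simp add: field_simps)
        also have "\<dots> \<le> lam * exp (2 * phi A t0 0 x) * (1 + t0)"
          using e lam t0 by (intro mult_right_mono mult_left_mono) auto
        finally show "real CARD('n) * t0^2 \<le> lam * exp (2 * phi A t0 0 x) * (1 + t0)" .
      qed
      moreover have "w = (\<lambda>z. max (v z) (U z))" unfolding w_def by (auto simp: max.commute)
      then have "lap w x \<ge> lap v x" using False lap_max[of U x v] by simp
      ultimately show ?thesis using s0 False unfolding w_def by simp
    qed
  qed
  then have "\<forall>x. w x \<le> U x" by (rule Umax)
  then have vU: "v x \<le> U x" for x unfolding w_def by (meson max.boundedE)
  have "\<bar>U x\<bar> \<le> A * a0 ^ nat (lnorm x)" for x
    using vU[of x] U0[of x] v_eq[of x] by linarith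
  then show ?thesis using A0 unfolding a0_def t0_def n_def by blast
qed

theorem theorem1p1:
  fixes lam :: real and M :: nat and p :: "nat \<Rightarrow> int ^ 'n" and nn :: "nat \<Rightarrow> nat"
  assumes "CARD('n) \<ge> 2"
    and "lam > 0"
    and "inj_on p {1..M}"
    and "\<forall>j\<in>{1..M}. nn j > 0"
  shows "\<exists>u :: int ^ 'n \<Rightarrow> real.
           cs_solution lam M p nn u
         \<and> (\<forall>q::real. q \<ge> 1 \<longrightarrow> in_lp q u) \<and> in_linf u
         \<and> (\<forall>f. cs_solution lam M p nn f \<longrightarrow> (\<forall>x. f x \<le> u x))
         \<and> (\<forall>e. 0 < e \<and> e < 1 \<longrightarrow>
              (\<exists>C R. \<forall>x. real_of_int (lnorm x) \<ge> R \<longrightarrow>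
                 \<bar>u x\<bar> \<le> C * exp (- ln (1 + lam / (2 * real CARD('n))) * (1 - e) * real_of_int (lnorm x))))"
proof -
  have lam: "lam > 0" by (rule assms(2))
  obtain w where w: "subsol lam M p nn w" "vanish_at_infinity w"
    using exists_subsol[OF assms(1) lam] by blast
  obtain U :: "int ^ 'n \<Rightarrow> real" where Ueq: "\<forall>x. lap U x = Fn lam (U x) + src M p nn x"
    and U0: "\<forall>x. U x \<le> 0" and Umax: "\<forall>w'. subsol lam M p nn w' \<longrightarrow> (\<forall>x. w' x \<le> U x)"
    using exists_max_solution[OF lam w(1)] by blast
  have wU: "w x \<le> U x" for x using Umax w(1) by blast
  have w0: "w x \<le> 0" for x using w(1) unfolding subsol_def by blast
  have Uvan: "vanish_at_infinity U"
    unfolding vanish_at_infinity_def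
  proof (intro allI impI)
    fix e :: real assume "e > 0"
    then obtain R where R: "\<forall>x. lnorm x \<ge> R \<longrightarrow> \<bar>w x\<bar> < e"
      using w(2) unfolding vanish_at_infinity_def by blast
    have "\<bar>U x\<bar> \<le> \<bar>w x\<bar>" for x
    proof -
      have u: "U x \<le> 0" using U0 by blast
      then show ?thesis using wU[of x] w0[of x] by (simp add: abs_of_nonpos)
    qed
    then show "\<exists>R. \<forall>x. lnorm x \<ge> R \<longrightarrow> \<bar>U x\<bar> < e" using R by (meson order_le_less_trans)
  qed
  have sol: "cs_solution lam M p nn U"
    unfolding cs_solution_def using Ueq Uvan by (simp add: Fn_def src_def)
  define t0 where "t0 = lam / (2 * real CARD('n))"
  have t0: "t0 > 0" unfolding t0_def using lam by simp
  define a0 where "a0 = 1 / (1 + t0)"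
  have a0: "a0 > 0" "a0 < 1" unfolding a0_def using t0 by auto
  obtain A where A0: "A \<ge> 0" and Ab: "\<forall>x. \<bar>U x\<bar> \<le> A * a0 ^ nat (lnorm x)"
    using decay_bound[OF lam _ _ Uvan, of M p nn] Ueq U0 Umax unfolding a0_def t0_def by blast
  have powle: "a0 ^ k \<le> 1" for k using a0 by (simp add: power_le_one)
  have P2: "\<forall>q::real. q \<ge> 1 \<longrightarrow> in_lp q U"
  proof (intro allI impI)
    fix q :: real assume q: "q \<ge> 1"
    define b where "b = a0 powr q"
    have b0: "b \<ge> 0" unfolding b_def by simp
    have b1: "b < 1" unfolding b_def using powr_less_mono2[of q a0 1] a0 q by simp
    have sb: "(\<lambda>x :: int ^ 'n. A powr q * b ^ nat (lnorm x)) summable_on UNIV"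
      by (rule summable_on_cmult_right[OF geo_summable[OF b0 b1]])
    show "in_lp q U"
      unfolding in_lp_def
    proof (rule summable_on_comparison_test[OF sb])
      fix x :: "int ^ 'n"
      show "0 \<le> \<bar>U x\<bar> powr q" by simp
      have "\<bar>U x\<bar> powr q \<le> (A * a0 ^ nat (lnorm x)) powr q"
        using Ab q by (intro powr_mono2) auto
      also have "\<dots> = A powr q * (a0 ^ nat (lnorm x)) powr q"
        using A0 a0 by (simp add: powr_mult)
      also have "(a0 ^ nat (lnorm x)) powr q = b ^ nat (lnorm x)"
      proof -
        have "(a0 ^ nat (lnorm x)) powr q = (a0 powr real (nat (lnorm x))) powr q"
          using a0 by (simp add: powr_realpow)
        also have "\<dots> = a0 powr (real (nat (lnorm x)) * q)" by (rule powr_powr)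
        also have "\<dots> = b ^ nat (lnorm x)" unfolding b_def using a0 by (simp add: powr_power)
        finally show ?thesis .
      qed
      finally show "\<bar>U x\<bar> powr q \<le> A powr q * b ^ nat (lnorm x)" .
    qed
  qed
  have P3: "in_linf U"
    unfolding in_linf_def
  proof (intro exI allI)
    fix x :: "int ^ 'n"
    have "A * a0 ^ nat (lnorm x) \<le> A * 1" using A0 powle by (intro mult_left_mono) auto
    then show "\<bar>U x\<bar> \<le> A" using Ab by (metis mult_1_right order_trans)
  qed
  have P4: "\<forall>f. cs_solution lam M p nn f \<longrightarrow> (\<forall>x. f x \<le> U x)"
  proof (intro allI impI)
    fix f x assume "cs_solution lam M p nn f"
    then have "subsol lam M p nn f" by (rule sol_subsol[OF lam])
    then show "f x \<le> U x" using Umax by blast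
  qed
  have P5: "\<forall>e. 0 < e \<and> e < 1 \<longrightarrow>
              (\<exists>C R. \<forall>x. real_of_int (lnorm x) \<ge> R \<longrightarrow>
                 \<bar>U x\<bar> \<le> C * exp (- ln (1 + lam / (2 * real CARD('n))) * (1 - e) * real_of_int (lnorm x)))"
  proof (intro allI impI)
    fix e :: real assume e: "0 < e \<and> e < 1"
    define m where "m = ln (1 + t0)"
    have m0: "m \<ge> 0" unfolding m_def using t0 by simp
    have a0m: "a0 = exp (- m)" unfolding a0_def m_def using t0 by (simp add: exp_minus inverse_eq_divide)
    show "\<exists>C R. \<forall>x. real_of_int (lnorm x) \<ge> R \<longrightarrow>
          \<bar>U x\<bar> \<le> C * exp (- ln (1 + lam / (2 * real CARD('n))) * (1 - e) * real_of_int (lnorm x))"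
    proof (rule exI[of _ A], rule exI[of _ 0], intro allI impI)
      fix x :: "int ^ 'n" assume "0 \<le> real_of_int (lnorm x)"
      then have l0: "lnorm x \<ge> 0" by simp
      define r where "r = real_of_int (lnorm x)"
      have r0: "r \<ge> 0" unfolding r_def using l0 by simp
      have "a0 ^ nat (lnorm x) = exp (real (nat (lnorm x)) * (- m))"
        unfolding a0m by (rule exp_of_nat_mult[symmetric])
      also have "real (nat (lnorm x)) = r" unfolding r_def using l0 by simp
      also have "exp (r * (- m)) \<le> exp (- m * (1 - e) * r)"
      proof -
        have "m * (1 - e) * r \<le> m * 1 * r" using m0 r0 e
          by (intro mult_right_mono mult_left_mono) auto
        then show ?thesis by (simp add: algebra_simps)
      qed
      finally have "a0 ^ nat (lnorm x) \<le> exp (- m * (1 - e) * r)" .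
      then have "\<bar>U x\<bar> \<le> A * exp (- m * (1 - e) * r)"
        using Ab A0 by (meson mult_left_mono order_trans)
      then show "\<bar>U x\<bar> \<le> A * exp (- ln (1 + lam / (2 * real CARD('n))) * (1 - e) * real_of_int (lnorm x))"
        unfolding m_def t0_def r_def .
    qed
  qed
  show ?thesis using sol P2 P3 P4 P5 by blast
qed

end
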